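(* Let $\alpha\in(0,1)$ satisfy $\frac{1-\alpha}{1+\alpha}<\alpha^{1/2}$, and fix $W_0,H_0>0$, $b_x,b_y\in\mathbb{R}$, $i,j,m,n\in\mathbb{Z}$. For $(i_1,i_2,j_1,j_2,m_1,m_2,n_1,n_2)\in[-\tfrac12,\tfrac12]^8$ define two boxes by $w_k=W_0/\alpha^{i+i_k}$, $h_k=H_0/\alpha^{j+j_k}$, $x_k=b_x\delta_i+(m+m_k)\delta_i$, $y_k=b_y\delta_j+(n+n_k)\delta_j$ ($k=1,2$), with $\delta_i=\frac{W_0}{\alpha^{i}}\frac{1-\alpha}{1+\alpha}$, $\delta_j=\frac{H_0}{\alpha^{j}}\frac{1-\alpha}{1+\alpha}$. Then the minimum of the IoU of the two boxes over $[-\tfrac12,\tfrac12]^8$ is attained at a vertex, i.e. at a point where each of $i_k,j_k,m_k,n_k$ ($k=1,2$) equals $-\tfrac12$ or $\tfrac12$. Consequently, the lower bound on the IoU of any two boxes hashed to the same cell equals the minimum of the IoU over the $2^8$ vertices (and is independent of $W_0,H_0,b_x,b_y,i,j,m,n$). *)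

theory Defs
  imports Complex_Main
begin

text \<open>Axis-aligned box given b_y (centre x, centre y, width w, height h).\<close>
type_synonym box = "real \<times> real \<times> real \<times> real"

definition overlap1 :: "real \<Rightarrow> real \<Rightarrow> real \<Rightarrow> real \<Rightarrow> real" where
  "overlap1 c1 l1 c2 l2 =
     max 0 (min (c1 + l1/2) (c2 + l2/2) - max (c1 - l1/2) (c2 - l2/2))"

definition inter_area :: "box \<Rightarrow> box \<Rightarrow> real" where
  "inter_area b1 b2 = (case b1 of (x1,y1,w1,h1) \<Rightarrow> case b2 of (x2,y2,w2,h2) \<Rightarrow>
      overlap1 x1 w1 x2 w2 * overlap1 y1 h1 y2 h2)"

definition union_area :: "box \<Rightarrow> box \<Rightarrow> real" where
  "union_area b1 b2 = (case b1 of (x1,y1,w1,h1) \<Rightarrow> case b2 of (x2,y2,w2,h2) \<Rightarrow>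
      w1*h1 + w2*h2 - inter_area b1 b2)"

definition IoU :: "box \<Rightarrow> box \<Rightarrow> real" where
  "IoU b1 b2 = inter_area b1 b2 / union_area b1 b2"

definition hbox :: "real \<Rightarrow> real \<Rightarrow> real \<Rightarrow> real \<Rightarrow> real \<Rightarrow> int \<Rightarrow> int \<Rightarrow> int \<Rightarrow> int
      \<Rightarrow> real \<Rightarrow> real \<Rightarrow> real \<Rightarrow> real \<Rightarrow> box" where
  "hbox \<alpha> W0 H0 b_x b_y i j m n ik jk mk nk =
     (let di = W0 / \<alpha> powr (real_of_int i) * ((1 - \<alpha>) / (1 + \<alpha>));
          dj = H0 / \<alpha> powr (real_of_int j) * ((1 - \<alpha>) / (1 + \<alpha>))
      in (b_x * di + (real_of_int m + mk) * di,
          b_y * dj + (real_of_int n + nk) * dj,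
          W0 / \<alpha> powr (real_of_int i + ik),
          H0 / \<alpha> powr (real_of_int j + jk)))"

definition hiou :: "real \<Rightarrow> real \<Rightarrow> real \<Rightarrow> real \<Rightarrow> real \<Rightarrow> int \<Rightarrow> int \<Rightarrow> int \<Rightarrow> int
      \<Rightarrow> real \<Rightarrow> real \<Rightarrow> real \<Rightarrow> real \<Rightarrow> real \<Rightarrow> real \<Rightarrow> real \<Rightarrow> real \<Rightarrow> real" where
  "hiou \<alpha> W0 H0 b_x b_y i j m n i1 i2 j1 j2 m1 m2 n1 n2 =
     IoU (hbox \<alpha> W0 H0 b_x b_y i j m n i1 j1 m1 n1) (hbox \<alpha> W0 H0 b_x b_y i j m n i2 j2 m2 n2)"

definition vert :: "real set" where "vert = {-1/2, 1/2}"
definition cube :: "real set" where "cube = {-1/2..1/2}"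

definition vertex_min :: "real \<Rightarrow> real \<Rightarrow> real \<Rightarrow> real \<Rightarrow> real \<Rightarrow> int \<Rightarrow> int \<Rightarrow> int \<Rightarrow> int \<Rightarrow> real" where
  "vertex_min \<alpha> W0 H0 b_x b_y i j m n =
     Min {hiou \<alpha> W0 H0 b_x b_y i j m n i1 i2 j1 j2 m1 m2 n1 n2 | i1 i2 j1 j2 m1 m2 n1 n2.
            i1 \<in> vert \<and> i2 \<in> vert \<and> j1 \<in> vert \<and> j2 \<in> vert \<and>
            m1 \<in> vert \<and> m2 \<in> vert \<and> n1 \<in> vert \<and> n2 \<in> vert}"

end

theory Submission
  imports Defs
begin


definition betw :: "real \<Rightarrow> real \<Rightarrow> real \<Rightarrow> bool" where
  "betw a x b \<longleftrightarrow> (a \<le> x \<and> x \<le> b) \<or> (b \<le> x \<and> x \<le> a)"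

lemma affine_qc: "a*w + b \<ge> min (a*l+b) (a*u+b)" if "betw l w u" for a w b l u :: real
proof (cases "a \<ge> 0")
  case True
  then show ?thesis using that mult_left_mono[of l w a] mult_left_mono[of w u a]
    mult_left_mono[of u w a] mult_left_mono[of w l a] unfolding betw_def by (auto simp: min_def)
next
  case False
  then show ?thesis using that mult_left_mono_neg[of l w a] mult_left_mono_neg[of w u a]
    mult_left_mono_neg[of u w a] mult_left_mono_neg[of w l a] unfolding betw_def by (auto simp: min_def)
qed

lemma overlap1_nonneg: "overlap1 a l b m \<ge> 0" by (simp add: overlap1_def)

lemma overlap1_le1: "overlap1 a l b m \<le> max 0 l" by (auto simp: overlap1_def max_def min_def)
lemma overlap1_le2: "overlap1 a l b m \<le> max 0 m" by (auto simp: overlap1_def max_def min_def)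

lemma overlap1_sym: "overlap1 a l b m = overlap1 b m a l"
  by (simp add: overlap1_def min.commute max.commute)

lemma overlap1_qc_center: "betw xl x xu \<Longrightarrow>
   overlap1 x w x2 w2 \<ge> min (overlap1 xl w x2 w2) (overlap1 xu w x2 w2)"
  unfolding betw_def overlap1_def by (auto simp: min_def max_def split: if_splits)

lemma inner_eq: "min (x + (v::real)/2) B - max (x - v/2) C =
   min (min v (x + v/2 - C)) (min (B - x + v/2) (B - C))"
  by (auto simp: min_def max_def)

lemma min4_qc:
  fixes L1 L2 L3 L4 :: "real \<Rightarrow> real"
  assumes "L1 w \<ge> min (L1 l) (L1 u)" "L2 w \<ge> min (L2 l) (L2 u)"
     "L3 w \<ge> min (L3 l) (L3 u)" "L4 w \<ge> min (L4 l) (L4 u)"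
  shows "min (min (L1 w) (L2 w)) (min (L3 w) (L4 w)) \<ge>
     min (min (min (L1 l) (L2 l)) (min (L3 l) (L4 l))) (min (min (L1 u) (L2 u)) (min (L3 u) (L4 u)))"
  using assms by (simp add: min_def split: if_splits)


lemma iou_eq: "IoU (x1,y1,w1,h1) (x2,y2,w2,h2) =
  overlap1 x1 w1 x2 w2 * overlap1 y1 h1 y2 h2 /
   (w1*h1 + w2*h2 - overlap1 x1 w1 x2 w2 * overlap1 y1 h1 y2 h2)"
  by (simp add: IoU_def inter_area_def union_area_def)

lemma iou_sym: "IoU b1 b2 = IoU b2 b1"
  by (cases b1; cases b2) (simp add: iou_eq overlap1_sym mult.commute add.commute)

lemma iou_swap: "IoU (x1,y1,w1,h1) (x2,y2,w2,h2) = IoU (y1,x1,h1,w1) (y2,x2,h2,w2)"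
  by (simp add: iou_eq mult.commute)

lemma frac_mono:
  fixes o1 o2 K S :: real
  assumes "0 \<le> o1" "o1 \<le> o2" "0 \<le> K" "o2 * K < S"
  shows "o1*K/(S - o1*K) \<le> o2*K/(S - o2*K)"
proof -
  have a: "o1*K \<le> o2*K" using assms by (simp add: mult_right_mono)
  have b: "S - o2*K > 0" using assms by simp
  have c: "S - o1*K > 0" using a b by simp
  have "0 \<le> o2*K" using assms by simp
  then have S0: "0 \<le> S" using assms(4) by linarith
  have "o1*K*(S - o2*K) \<le> o2*K*(S - o1*K)"
  proof -
    have "o1*K*(S - o2*K) = o1*K*S - o1*K*(o2*K)" by (simp add: algebra_simps)
    also have "\<dots> \<le> o2*K*S - o2*K*(o1*K)"
      using mult_right_mono[OF a S0] b c a by (simp add: algebra_simps)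
    also have "\<dots> = o2*K*(S - o1*K)" by (simp add: algebra_simps)
    finally show ?thesis .
  qed
  then show ?thesis using b c by (simp add: divide_simps)
qed

lemma iou_center:
  assumes "w1 > 0" "h1 > 0" "w2 > 0" "h2 > 0" "betw xl x xu"
  shows "IoU (x,y1,w1,h1) (x2,y2,w2,h2) \<ge>
     min (IoU (xl,y1,w1,h1) (x2,y2,w2,h2)) (IoU (xu,y1,w1,h1) (x2,y2,w2,h2))"
proof -
  define K where "K = overlap1 y1 h1 y2 h2"
  define S where "S = w1*h1 + w2*h2"
  have K: "0 \<le> K" "K \<le> h1" unfolding K_def using overlap1_nonneg overlap1_le1[of y1 h1 y2 h2] assms
    by auto
  have bnd: "\<And>c. overlap1 c w1 x2 w2 * K < S"
  proof -
    fix c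
    have o: "overlap1 c w1 x2 w2 \<le> w1" using overlap1_le1[of c w1 x2 w2] assms by simp
    have "overlap1 c w1 x2 w2 * K \<le> w1 * h1"
      using mult_mono[OF o K(2)] assms K by simp
    then show "overlap1 c w1 x2 w2 * K < S" unfolding S_def using assms mult_pos_pos[of w2 h2] by linarith
  qed
  have "overlap1 x w1 x2 w2 \<ge> overlap1 xl w1 x2 w2 \<or> overlap1 x w1 x2 w2 \<ge> overlap1 xu w1 x2 w2"
    using overlap1_qc_center[OF assms(5), of w1 x2 w2] by linarith
  then show ?thesis
    unfolding iou_eq K_def[symmetric] S_def[symmetric]
    using frac_mono[OF overlap1_nonneg _ K(1) bnd] by (metis min.coboundedI1 min.coboundedI2)
qed


lemma min_diff: "min a b - (c::real) = min (a - c) (b - c)" by (simp add: min_def)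

lemma psi_qc:
  fixes P Q x B C l w u :: real
  assumes "P \<ge> 0" "betw l w u"
  defines "inn \<equiv> \<lambda>v. min (x + v/2) B - max (x - v/2) C"
  shows "P * inn w - Q * w \<ge> min (P * inn l - Q * l) (P * inn u - Q * u)"
proof -
  have aff: "\<And>a b. a*w+b \<ge> min (a*l+b) (a*u+b)" using affine_qc[OF assms(2)] by blast
  define L1 where "L1 = (\<lambda>v::real. (P - Q)*v + 0)"
  define L2 where "L2 = (\<lambda>v::real. (P/2 - Q)*v + P*(x - C))"
  define L3 where "L3 = (\<lambda>v::real. (P/2 - Q)*v + P*(B - x))"
  define L4 where "L4 = (\<lambda>v::real. (-Q)*v + P*(B - C))"
  have eq: "P * inn v - Q * v = min (min (L1 v) (L2 v)) (min (L3 v) (L4 v))" for v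
    unfolding inn_def inner_eq min_mult_distrib_left[of P] using assms(1)
    by (simp add: min_diff L1_def L2_def L3_def L4_def algebra_simps)
  show ?thesis unfolding eq
    by (rule min4_qc) (simp_all only: L1_def L2_def L3_def L4_def aff)
qed


lemma iou_width:
  assumes "wl > 0" "wu > 0" "h1 > 0" "w2 > 0" "h2 > 0" "betw wl w wu"
  shows "IoU (x1,y1,w,h1) (x2,y2,w2,h2) \<ge>
     min (IoU (x1,y1,wl,h1) (x2,y2,w2,h2)) (IoU (x1,y1,wu,h1) (x2,y2,w2,h2))"
proof -
  define K where "K = overlap1 y1 h1 y2 h2"
  define A2 where "A2 = w2*h2"
  define ox where "ox = (\<lambda>v. overlap1 x1 v x2 w2)"
  define F where "F = (\<lambda>v. ox v * K / (v*h1 + A2 - ox v * K))"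
  define inn where "inn = (\<lambda>v. min (x1 + v/2) (x2 + w2/2) - max (x1 - v/2) (x2 - w2/2))"
  have oxi: "ox v = max 0 (inn v)" for v unfolding ox_def inn_def overlap1_def by simp
  have A2: "A2 > 0" unfolding A2_def using assms by simp
  have w: "w > 0" using assms(1,2,6) unfolding betw_def by auto
  have K: "0 \<le> K" "K \<le> h1" unfolding K_def using overlap1_nonneg overlap1_le1[of y1 h1 y2 h2] assms
    by auto
  have oxn: "0 \<le> ox v" for v unfolding ox_def by (rule overlap1_nonneg)
  have D: "v*h1 + A2 - ox v * K > 0" if "v > 0" for v
  proof -
    have o: "ox v \<le> v" using overlap1_le1[of x1 v x2 w2] that unfolding ox_def by simp
    have "ox v * K \<le> v * h1" using mult_mono[OF o K(2)] that K oxn by simp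
    then show ?thesis using A2 by linarith
  qed
  have Fn: "F v \<ge> 0" if "v > 0" for v unfolding F_def using D[OF that] oxn K by simp
  have key: "F v \<ge> t \<longleftrightarrow> ox v * K * (1+t) \<ge> t*(v*h1 + A2)" if "v > 0" for v t
  proof -
    have "F v \<ge> t \<longleftrightarrow> t * (v*h1 + A2 - ox v * K) \<le> ox v * K"
      unfolding F_def using D[OF that] by (simp add: pos_le_divide_eq)
    also have "\<dots> \<longleftrightarrow> ox v * K * (1+t) \<ge> t*(v*h1 + A2)" by (simp add: algebra_simps)
    finally show ?thesis .
  qed
  define t where "t = min (F wl) (F wu)"
  have "F w \<ge> t"
  proof (cases "t \<le> 0")
    case True then show ?thesis using Fn[OF w] by linarith
  next
    case False
    then have t: "t > 0" by simp
    have P: "K*(1+t) \<ge> 0" using K t by simp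
    have psi: "K*(1+t) * inn v - (t*h1) * v \<ge> t*A2" if "v > 0" "F v \<ge> t" for v
    proof -
      have a: "ox v * K * (1+t) \<ge> t*(v*h1 + A2)" using key[OF that(1)] that(2) by simp
      have "t*(v*h1 + A2) > 0" using t that(1) assms(3) A2 by (simp add: add_pos_pos)
      then have "ox v * K * (1+t) > 0" using a by linarith
      then have "ox v \<noteq> 0" by auto
      then have "ox v = inn v" using oxi[of v] by (auto simp: max_def split: if_splits)
      then show ?thesis using a by (simp add: algebra_simps)
    qed
    have p1: "K*(1+t) * inn wl - (t*h1) * wl \<ge> t*A2" using psi[OF assms(1)] t_def by simp
    have p2: "K*(1+t) * inn wu - (t*h1) * wu \<ge> t*A2" using psi[OF assms(2)] t_def by simp
    have "K*(1+t) * inn w - (t*h1) * w \<ge> t*A2"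
      using psi_qc[OF P assms(6), of "x1" "x2 + w2/2" "x2 - w2/2" "t*h1"] p1 p2
      unfolding inn_def by linarith
    moreover have "t*(w*h1 + A2) > 0" using t w assms(3) A2 by (simp add: add_pos_pos)
    ultimately have b: "K*(1+t) * inn w > 0" using t w assms(3) by (simp add: algebra_simps)
    have "inn w > 0"
    proof (rule ccontr)
      assume "\<not> inn w > 0"
      then have "K*(1+t) * inn w \<le> 0" using P by (simp add: mult_nonneg_nonpos)
      then show False using b by linarith
    qed
    then have "ox w = inn w" using oxi by simp
    then show ?thesis using key[OF w] \<open>K*(1+t) * inn w - (t*h1) * w \<ge> t*A2\<close>
      by (simp add: algebra_simps)
  qed
  then show ?thesis unfolding iou_eq t_def F_def ox_def K_def A2_def by simp
qed


lemma iou_cy: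
  assumes "w1 > 0" "h1 > 0" "w2 > 0" "h2 > 0" "betw yl y yu"
  shows "IoU (x1,y,w1,h1) (x2,y2,w2,h2) \<ge>
     min (IoU (x1,yl,w1,h1) (x2,y2,w2,h2)) (IoU (x1,yu,w1,h1) (x2,y2,w2,h2))"
  using iou_center[of h1 w1 h2 w2 yl y yu x1 y2 x2] assms by (simp add: iou_swap)

lemma iou_height:
  assumes "hl > 0" "hu > 0" "w1 > 0" "w2 > 0" "h2 > 0" "betw hl h hu"
  shows "IoU (x1,y1,w1,h) (x2,y2,w2,h2) \<ge>
     min (IoU (x1,y1,w1,hl) (x2,y2,w2,h2)) (IoU (x1,y1,w1,hu) (x2,y2,w2,h2))"
  using iou_width[of hl hu w1 h2 w2 h y1 x1 y2 x2] assms by (simp add: iou_swap)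

lemma iou_center2:
  assumes "w1 > 0" "h1 > 0" "w2 > 0" "h2 > 0" "betw xl x xu"
  shows "IoU (x1,y1,w1,h1) (x,y2,w2,h2) \<ge>
     min (IoU (x1,y1,w1,h1) (xl,y2,w2,h2)) (IoU (x1,y1,w1,h1) (xu,y2,w2,h2))"
  using iou_center[of w2 h2 w1 h1 xl x xu y2 x1 y1] assms by (simp add: iou_sym[of "(x1,y1,w1,h1)"])

lemma iou_width2:
  assumes "wl > 0" "wu > 0" "h1 > 0" "w1 > 0" "h2 > 0" "betw wl w wu"
  shows "IoU (x1,y1,w1,h1) (x2,y2,w,h2) \<ge>
     min (IoU (x1,y1,w1,h1) (x2,y2,wl,h2)) (IoU (x1,y1,w1,h1) (x2,y2,wu,h2))"
  using iou_width[of wl wu h2 w1 h1 w x2 y2 x1 y1] assms by (simp add: iou_sym[of "(x1,y1,w1,h1)"])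

lemma iou_cy2:
  assumes "w1 > 0" "h1 > 0" "w2 > 0" "h2 > 0" "betw yl y yu"
  shows "IoU (x1,y1,w1,h1) (x2,y,w2,h2) \<ge>
     min (IoU (x1,y1,w1,h1) (x2,yl,w2,h2)) (IoU (x1,y1,w1,h1) (x2,yu,w2,h2))"
  using iou_cy[of w2 h2 w1 h1 yl y yu x2 x1 y1] assms by (simp add: iou_sym[of "(x1,y1,w1,h1)"])

lemma iou_height2:
  assumes "hl > 0" "hu > 0" "w1 > 0" "w2 > 0" "h1 > 0" "betw hl h hu"
  shows "IoU (x1,y1,w1,h1) (x2,y2,w2,h) \<ge>
     min (IoU (x1,y1,w1,h1) (x2,y2,w2,hl)) (IoU (x1,y1,w1,h1) (x2,y2,w2,hu))"
  using iou_height[of hl hu w2 w1 h1 h x2 y2 x1 y1] assms by (simp add: iou_sym[of "(x1,y1,w1,h1)"])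



definition DD :: "real \<Rightarrow> real \<Rightarrow> int \<Rightarrow> real" where
  "DD a W i = W / a powr (real_of_int i) * ((1 - a) / (1 + a))"
definition CX :: "real \<Rightarrow> real \<Rightarrow> real \<Rightarrow> int \<Rightarrow> int \<Rightarrow> real \<Rightarrow> real" where
  "CX a W b i m t = b * DD a W i + (real_of_int m + t) * DD a W i"
definition WD :: "real \<Rightarrow> real \<Rightarrow> int \<Rightarrow> real \<Rightarrow> real" where
  "WD a W i t = W / a powr (real_of_int i + t)"

lemma hbox_eq: "hbox a W0 H0 b_x b_y i j m n ik jk mk nk =
   (CX a W0 b_x i m mk, CX a H0 b_y j n nk, WD a W0 i ik, WD a H0 j jk)"
  by (simp add: hbox_def Let_def CX_def DD_def WD_def)

lemma hiou_eq: "hiou a W0 H0 b_x b_y i j m n i1 i2 j1 j2 m1 m2 n1 n2 =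
  IoU (CX a W0 b_x i m m1, CX a H0 b_y j n n1, WD a W0 i i1, WD a H0 j j1)
      (CX a W0 b_x i m m2, CX a H0 b_y j n n2, WD a W0 i i2, WD a H0 j j2)"
  by (simp add: hiou_def hbox_eq)

lemma WD_pos: "0 < a \<Longrightarrow> 0 < W \<Longrightarrow> WD a W i t > 0" by (simp add: WD_def)

lemma WD_betw: assumes "0 < a" "a < 1" "0 < W" "t \<in> cube"
  shows "betw (WD a W i (-1/2)) (WD a W i t) (WD a W i (1/2))"
proof -
  have t: "-1/2 \<le> t" "t \<le> 1/2" using assms(4) by (auto simp: cube_def)
  have p1: "a powr (real_of_int i + t) \<le> a powr (real_of_int i + -1/2)"
    by (rule powr_mono') (use t assms in auto)
  have p2: "a powr (real_of_int i + 1/2) \<le> a powr (real_of_int i + t)"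
    by (rule powr_mono') (use t assms in auto)
  have "WD a W i (-1/2) \<le> WD a W i t" unfolding WD_def
    using p1 assms by (intro divide_left_mono) auto
  moreover have "WD a W i t \<le> WD a W i (1/2)" unfolding WD_def
    using p2 assms by (intro divide_left_mono) auto
  ultimately show ?thesis by (simp add: betw_def)
qed

lemma CX_betw: assumes "0 < a" "a < 1" "0 < W" "t \<in> cube"
  shows "betw (CX a W b i m (-1/2)) (CX a W b i m t) (CX a W b i m (1/2))"
proof -
  have t: "-1/2 \<le> t" "t \<le> 1/2" using assms(4) by (auto simp: cube_def)
  have d: "DD a W i \<ge> 0" unfolding DD_def using assms by simp
  have "(real_of_int m + -1/2) * DD a W i \<le> (real_of_int m + t) * DD a W i"
    using t d by (intro mult_right_mono) auto
  moreover have "(real_of_int m + t) * DD a W i \<le> (real_of_int m + 1/2) * DD a W i"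
    using t d by (intro mult_right_mono) auto
  ultimately show ?thesis by (simp add: betw_def CX_def)
qed

lemma ex_vert: "min (f (-1/2)) (f (1/2)) \<le> c \<Longrightarrow> \<exists>v\<in>vert. f v \<le> (c::real)"
  unfolding vert_def by (cases "f (-1/2) \<le> f (1/2)") (auto simp: min_def)

context
  fixes a W0 H0 b_x b_y :: real and i j m n :: int
  assumes a: "0 < a" "a < 1" and W: "W0 > 0" "H0 > 0"
begin

lemma pos: "WD a W0 i t > 0" "WD a H0 j t > 0"
  using WD_pos a W by auto

lemma step_i1: "t \<in> cube \<Longrightarrow> \<exists>v\<in>vert. hiou a W0 H0 b_x b_y i j m n v i2 j1 j2 m1 m2 n1 n2 \<le> hiou a W0 H0 b_x b_y i j m n t i2 j1 j2 m1 m2 n1 n2"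
  unfolding hiou_eq by (rule ex_vert, rule iou_width) (use pos WD_betw a W in auto)
lemma step_i2: "t \<in> cube \<Longrightarrow> \<exists>v\<in>vert. hiou a W0 H0 b_x b_y i j m n i1 v j1 j2 m1 m2 n1 n2 \<le> hiou a W0 H0 b_x b_y i j m n i1 t j1 j2 m1 m2 n1 n2"
  unfolding hiou_eq by (rule ex_vert, rule iou_width2) (use pos WD_betw a W in auto)
lemma step_j1: "t \<in> cube \<Longrightarrow> \<exists>v\<in>vert. hiou a W0 H0 b_x b_y i j m n i1 i2 v j2 m1 m2 n1 n2 \<le> hiou a W0 H0 b_x b_y i j m n i1 i2 t j2 m1 m2 n1 n2"
  unfolding hiou_eq by (rule ex_vert, rule iou_height) (use pos WD_betw a W in auto)
lemma step_j2: "t \<in> cube \<Longrightarrow> \<exists>v\<in>vert. hiou a W0 H0 b_x b_y i j m n i1 i2 j1 v m1 m2 n1 n2 \<le> hiou a W0 H0 b_x b_y i j m n i1 i2 j1 t m1 m2 n1 n2"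
  unfolding hiou_eq by (rule ex_vert, rule iou_height2) (use pos WD_betw a W in auto)
lemma step_m1: "t \<in> cube \<Longrightarrow> \<exists>v\<in>vert. hiou a W0 H0 b_x b_y i j m n i1 i2 j1 j2 v m2 n1 n2 \<le> hiou a W0 H0 b_x b_y i j m n i1 i2 j1 j2 t m2 n1 n2"
  unfolding hiou_eq by (rule ex_vert, rule iou_center) (use pos CX_betw a W in auto)
lemma step_m2: "t \<in> cube \<Longrightarrow> \<exists>v\<in>vert. hiou a W0 H0 b_x b_y i j m n i1 i2 j1 j2 m1 v n1 n2 \<le> hiou a W0 H0 b_x b_y i j m n i1 i2 j1 j2 m1 t n1 n2"
  unfolding hiou_eq by (rule ex_vert, rule iou_center2) (use pos CX_betw a W in auto)
lemma step_n1: "t \<in> cube \<Longrightarrow> \<exists>v\<in>vert. hiou a W0 H0 b_x b_y i j m n i1 i2 j1 j2 m1 m2 v n2 \<le> hiou a W0 H0 b_x b_y i j m n i1 i2 j1 j2 m1 m2 t n2"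
  unfolding hiou_eq by (rule ex_vert, rule iou_cy) (use pos CX_betw a W in auto)
lemma step_n2: "t \<in> cube \<Longrightarrow> \<exists>v\<in>vert. hiou a W0 H0 b_x b_y i j m n i1 i2 j1 j2 m1 m2 n1 v \<le> hiou a W0 H0 b_x b_y i j m n i1 i2 j1 j2 m1 m2 n1 t"
  unfolding hiou_eq by (rule ex_vert, rule iou_cy2) (use pos CX_betw a W in auto)

end


lemma min_aff: "s > 0 \<Longrightarrow> min (s*X+e) (s*Y+e) = s * min X Y + (e::real)"
  by (auto simp: min_def)
lemma max_aff: "s > 0 \<Longrightarrow> max (s*X+e) (s*Y+e) = s * max X Y + (e::real)"
  by (auto simp: max_def)

lemma overlap1_scale: assumes "s > 0"
  shows "overlap1 (s*a+e) (s*l) (s*b+e) (s*m) = s * overlap1 a l b m"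
proof -
  have 1: "s*a+e + s*l/2 = s*(a+l/2)+e" "s*b+e + s*m/2 = s*(b+m/2)+e"
          "s*a+e - s*l/2 = s*(a-l/2)+e" "s*b+e - s*m/2 = s*(b-m/2)+e" by (simp_all add: algebra_simps)
  have "max 0 ((s * X + e) - (s * Y + e)) = s * max 0 (X - Y)" for X Y
  proof -
    have "(s * X + e) - (s * Y + e) = s * (X - Y)" by (simp add: algebra_simps)
    then show ?thesis using assms by (simp add: max_mult_distrib_left)
  qed
  then show ?thesis unfolding overlap1_def 1 min_aff[OF assms] max_aff[OF assms] by simp
qed

lemma iou_scale: assumes "s > 0" "t > 0"
  shows "IoU (s*a1+e, t*b1+f, s*c1, t*d1) (s*a2+e, t*b2+f, s*c2, t*d2) = IoU (a1,b1,c1,d1) (a2,b2,c2,d2)"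
proof -
  define O1 where "O1 = overlap1 a1 c1 a2 c2"
  define O2 where "O2 = overlap1 b1 d1 b2 d2"
  have "IoU (s*a1+e, t*b1+f, s*c1, t*d1) (s*a2+e, t*b2+f, s*c2, t*d2) =
      (s*t) * (O1*O2) / ((s*t) * (c1*d1 + c2*d2 - O1*O2))"
    unfolding iou_eq overlap1_scale[OF assms(1)] overlap1_scale[OF assms(2)] O1_def O2_def
    by (simp add: algebra_simps)
  also have "\<dots> = O1*O2 / (c1*d1 + c2*d2 - O1*O2)" using assms by simp
  finally show ?thesis unfolding iou_eq O1_def O2_def .
qed

lemma CX_scale: assumes "0 < a" shows "CX a W b i m t = (W / a powr real_of_int i) * CX a 1 0 0 0 t + (b + real_of_int m) * DD a W i"
proof -
  define S where "S = W / a powr real_of_int i"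
  have d: "DD a W i = S * DD a 1 0" using assms by (simp add: DD_def S_def)
  have "CX a W b i m t = (b + real_of_int m + t) * DD a W i" by (simp add: CX_def algebra_simps)
  also have "\<dots> = S * (t * DD a 1 0) + (b + real_of_int m) * DD a W i"
    unfolding d by (simp add: algebra_simps)
  also have "t * DD a 1 0 = CX a 1 0 0 0 t" by (simp add: CX_def)
  finally show ?thesis by (simp only: S_def)
qed
lemma WD_scale: "0 < a \<Longrightarrow> WD a W i t = (W / a powr real_of_int i) * WD a 1 0 t"
  by (simp add: WD_def powr_add)

lemma hiou_norm: assumes "0 < a" "0 < W0" "0 < H0"
  shows "hiou a W0 H0 b_x b_y i j m n i1 i2 j1 j2 m1 m2 n1 n2 = hiou a 1 1 0 0 0 0 0 0 i1 i2 j1 j2 m1 m2 n1 n2"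
proof -
  have s: "W0 / a powr real_of_int i > 0" "H0 / a powr real_of_int j > 0" using assms by auto
  show ?thesis unfolding hiou_eq
    using iou_scale[OF s] CX_scale[OF assms(1)] WD_scale[OF assms(1)]
    by metis
qed


lemma descend:
  assumes a: "0 < a" "a < 1" and W: "W0 > 0" "H0 > 0"
  assumes p: "i1 \<in> cube" "i2 \<in> cube" "j1 \<in> cube" "j2 \<in> cube" "m1 \<in> cube" "m2 \<in> cube" "n1 \<in> cube" "n2 \<in> cube"
  shows "\<exists>v1\<in>vert. \<exists>v2\<in>vert. \<exists>v3\<in>vert. \<exists>v4\<in>vert. \<exists>v5\<in>vert. \<exists>v6\<in>vert. \<exists>v7\<in>vert. \<exists>v8\<in>vert.
     hiou a W0 H0 b_x b_y i j m n v1 v2 v3 v4 v5 v6 v7 v8 \<le> hiou a W0 H0 b_x b_y i j m n i1 i2 j1 j2 m1 m2 n1 n2"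
proof -
  note S = step_i1[OF a W, where b_x=b_x and b_y=b_y and i=i and j=j and m=m and n=n]
           step_i2[OF a W, where b_x=b_x and b_y=b_y and i=i and j=j and m=m and n=n]
           step_j1[OF a W, where b_x=b_x and b_y=b_y and i=i and j=j and m=m and n=n]
           step_j2[OF a W, where b_x=b_x and b_y=b_y and i=i and j=j and m=m and n=n]
           step_m1[OF a W, where b_x=b_x and b_y=b_y and i=i and j=j and m=m and n=n]
           step_m2[OF a W, where b_x=b_x and b_y=b_y and i=i and j=j and m=m and n=n]
           step_n1[OF a W, where b_x=b_x and b_y=b_y and i=i and j=j and m=m and n=n]
           step_n2[OF a W, where b_x=b_x and b_y=b_y and i=i and j=j and m=m and n=n]
  obtain v1 where v1: "v1 \<in> vert" "hiou a W0 H0 b_x b_y i j m n v1 i2 j1 j2 m1 m2 n1 n2 \<le> hiou a W0 H0 b_x b_y i j m n i1 i2 j1 j2 m1 m2 n1 n2"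
    using S(1)[OF p(1)] by blast
  obtain v2 where v2: "v2 \<in> vert" "hiou a W0 H0 b_x b_y i j m n v1 v2 j1 j2 m1 m2 n1 n2 \<le> hiou a W0 H0 b_x b_y i j m n v1 i2 j1 j2 m1 m2 n1 n2"
    using S(2)[OF p(2)] by blast
  obtain v3 where v3: "v3 \<in> vert" "hiou a W0 H0 b_x b_y i j m n v1 v2 v3 j2 m1 m2 n1 n2 \<le> hiou a W0 H0 b_x b_y i j m n v1 v2 j1 j2 m1 m2 n1 n2"
    using S(3)[OF p(3)] by blast
  obtain v4 where v4: "v4 \<in> vert" "hiou a W0 H0 b_x b_y i j m n v1 v2 v3 v4 m1 m2 n1 n2 \<le> hiou a W0 H0 b_x b_y i j m n v1 v2 v3 j2 m1 m2 n1 n2"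
    using S(4)[OF p(4)] by blast
  obtain v5 where v5: "v5 \<in> vert" "hiou a W0 H0 b_x b_y i j m n v1 v2 v3 v4 v5 m2 n1 n2 \<le> hiou a W0 H0 b_x b_y i j m n v1 v2 v3 v4 m1 m2 n1 n2"
    using S(5)[OF p(5)] by blast
  obtain v6 where v6: "v6 \<in> vert" "hiou a W0 H0 b_x b_y i j m n v1 v2 v3 v4 v5 v6 n1 n2 \<le> hiou a W0 H0 b_x b_y i j m n v1 v2 v3 v4 v5 m2 n1 n2"
    using S(6)[OF p(6)] by blast
  obtain v7 where v7: "v7 \<in> vert" "hiou a W0 H0 b_x b_y i j m n v1 v2 v3 v4 v5 v6 v7 n2 \<le> hiou a W0 H0 b_x b_y i j m n v1 v2 v3 v4 v5 v6 n1 n2"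
    using S(7)[OF p(7)] by blast
  obtain v8 where v8: "v8 \<in> vert" "hiou a W0 H0 b_x b_y i j m n v1 v2 v3 v4 v5 v6 v7 v8 \<le> hiou a W0 H0 b_x b_y i j m n v1 v2 v3 v4 v5 v6 v7 n2"
    using S(8)[OF p(8)] by blast
  have le: "hiou a W0 H0 b_x b_y i j m n v1 v2 v3 v4 v5 v6 v7 v8 \<le> hiou a W0 H0 b_x b_y i j m n i1 i2 j1 j2 m1 m2 n1 n2"
    using v1(2) v2(2) v3(2) v4(2) v5(2) v6(2) v7(2) v8(2) by linarith
  show ?thesis
    apply (rule bexI[of _ v1], rule bexI[of _ v2], rule bexI[of _ v3], rule bexI[of _ v4],
           rule bexI[of _ v5], rule bexI[of _ v6], rule bexI[of _ v7], rule bexI[of _ v8])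
    by (rule le v1(1) v2(1) v3(1) v4(1) v5(1) v6(1) v7(1) v8(1))+
qed



definition VS :: "(real\<Rightarrow>real\<Rightarrow>real\<Rightarrow>real\<Rightarrow>real\<Rightarrow>real\<Rightarrow>real\<Rightarrow>real\<Rightarrow>real) \<Rightarrow> real set" where
  "VS g = {g i1 i2 j1 j2 m1 m2 n1 n2 | i1 i2 j1 j2 m1 m2 n1 n2.
            i1 \<in> vert \<and> i2 \<in> vert \<and> j1 \<in> vert \<and> j2 \<in> vert \<and>
            m1 \<in> vert \<and> m2 \<in> vert \<and> n1 \<in> vert \<and> n2 \<in> vert}"

lemma VS_vm: "vertex_min a W0 H0 b_x b_y i j m n = Min (VS (hiou a W0 H0 b_x b_y i j m n))"
  unfolding vertex_min_def VS_def by (rule refl)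

lemma VS_elim: assumes "z \<in> VS g"
  obtains i1 i2 j1 j2 m1 m2 n1 n2 where "i1 \<in> vert" "i2 \<in> vert" "j1 \<in> vert" "j2 \<in> vert"
      "m1 \<in> vert" "m2 \<in> vert" "n1 \<in> vert" "n2 \<in> vert" "z = g i1 i2 j1 j2 m1 m2 n1 n2"
  using assms unfolding VS_def by (elim CollectE exE conjE) (rule that; assumption)

lemma VS_intro: "i1 \<in> vert \<Longrightarrow> i2 \<in> vert \<Longrightarrow> j1 \<in> vert \<Longrightarrow> j2 \<in> vert \<Longrightarrow>
      m1 \<in> vert \<Longrightarrow> m2 \<in> vert \<Longrightarrow> n1 \<in> vert \<Longrightarrow> n2 \<in> vert \<Longrightarrow> g i1 i2 j1 j2 m1 m2 n1 n2 \<in> VS g"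
  unfolding VS_def mem_Collect_eq
  apply (rule exI[of _ i1], rule exI[of _ i2], rule exI[of _ j1], rule exI[of _ j2],
         rule exI[of _ m1], rule exI[of _ m2], rule exI[of _ n1], rule exI[of _ n2])
  apply (intro conjI refl)
  by assumption+

lemma t1: "finite (vert \<times> vert \<times> vert \<times> vert \<times> vert \<times> vert \<times> vert \<times> vert)"
proof -
  have fv: "finite vert" unfolding vert_def by simp
  note F = finite_cartesian_product[OF fv]
  show ?thesis by (rule F[OF F[OF F[OF F[OF F[OF F[OF F[OF fv]]]]]]])
qed
lemma t2: "z \<in> VS g \<Longrightarrow> z \<in> (\<lambda>(i1,i2,j1,j2,m1,m2,n1,n2). g i1 i2 j1 j2 m1 m2 n1 n2) ` (vert \<times> vert \<times> vert \<times> vert \<times> vert \<times> vert \<times> vert \<times> vert)"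
  apply (erule VS_elim)
  apply (rule_tac x="(i1,i2,j1,j2,m1,m2,n1,n2)" in image_eqI)
  apply simp
  apply simp
  done
lemma VS_finite: "finite (VS g)"
  by (rule finite_subset[OF subsetI[OF t2] finite_imageI[OF t1]])
lemma descend_obt:
  assumes "0 < a" "a < 1" "W0 > 0" "H0 > 0"
  assumes "i1 \<in> cube" "i2 \<in> cube" "j1 \<in> cube" "j2 \<in> cube" "m1 \<in> cube" "m2 \<in> cube" "n1 \<in> cube" "n2 \<in> cube"
  obtains v1 v2 v3 v4 v5 v6 v7 v8 where "v1 \<in> vert" "v2 \<in> vert" "v3 \<in> vert" "v4 \<in> vert" "v5 \<in> vert" "v6 \<in> vert" "v7 \<in> vert" "v8 \<in> vert"
     "hiou a W0 H0 b_x b_y i j m n v1 v2 v3 v4 v5 v6 v7 v8 \<le> hiou a W0 H0 b_x b_y i j m n i1 i2 j1 j2 m1 m2 n1 n2"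
  using descend[OF assms, of b_x b_y i j m n] by (elim bexE) (rule that; assumption)

theorem theorem2:
  fixes \<alpha> W0 H0 b_x b_y :: real and i j m n :: int
  assumes "0 < \<alpha>" "\<alpha> < 1" "(1 - \<alpha>) / (1 + \<alpha>) < sqrt \<alpha>"
    and "W0 > 0" "H0 > 0"
  shows "(\<exists>i1\<in>vert. \<exists>i2\<in>vert. \<exists>j1\<in>vert. \<exists>j2\<in>vert. \<exists>m1\<in>vert. \<exists>m2\<in>vert. \<exists>n1\<in>vert. \<exists>n2\<in>vert.
           \<forall>i1'\<in>cube. \<forall>i2'\<in>cube. \<forall>j1'\<in>cube. \<forall>j2'\<in>cube. \<forall>m1'\<in>cube. \<forall>m2'\<in>cube. \<forall>n1'\<in>cube. \<forall>n2'\<in>cube.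
             hiou \<alpha> W0 H0 b_x b_y i j m n i1 i2 j1 j2 m1 m2 n1 n2
               \<le> hiou \<alpha> W0 H0 b_x b_y i j m n i1' i2' j1' j2' m1' m2' n1' n2')
       \<and> (\<forall>i1\<in>cube. \<forall>i2\<in>cube. \<forall>j1\<in>cube. \<forall>j2\<in>cube. \<forall>m1\<in>cube. \<forall>m2\<in>cube. \<forall>n1\<in>cube. \<forall>n2\<in>cube.
             vertex_min \<alpha> W0 H0 b_x b_y i j m n \<le> hiou \<alpha> W0 H0 b_x b_y i j m n i1 i2 j1 j2 m1 m2 n1 n2)
       \<and> (\<forall>W0' H0' b_x' b_y' :: real. \<forall>i' j' m' n' :: int. W0' > 0 \<longrightarrow> H0' > 0 \<longrightarrow>
             vertex_min \<alpha> W0' H0' b_x' b_y' i' j' m' n' = vertex_min \<alpha> W0 H0 b_x b_y i j m n)"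
proof -
  define f where "f = hiou \<alpha> W0 H0 b_x b_y i j m n"
  define V where "V = VS f"
  have vm: "vertex_min \<alpha> W0 H0 b_x b_y i j m n = Min V" unfolding V_def f_def by (rule VS_vm)
  have fv: "-1/2 \<in> vert" unfolding vert_def by simp
  have finV: "finite V" unfolding V_def by (rule VS_finite)
  have "f (-1/2) (-1/2) (-1/2) (-1/2) (-1/2) (-1/2) (-1/2) (-1/2) \<in> V"
    unfolding V_def by (rule VS_intro) (rule fv)+
  then have neV: "V \<noteq> {}" by (rule ex_in_conv[THEN iffD1, OF exI])
  have minle: "Min V \<le> f i1 i2 j1 j2 m1 m2 n1 n2" if "i1 \<in> vert" "i2 \<in> vert" "j1 \<in> vert" "j2 \<in> vert"
    "m1 \<in> vert" "m2 \<in> vert" "n1 \<in> vert" "n2 \<in> vert" for i1 i2 j1 j2 m1 m2 n1 n2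
    by (rule Min_le[OF finV]) (unfold V_def, rule VS_intro[OF that])
  have part2: "\<forall>i1\<in>cube. \<forall>i2\<in>cube. \<forall>j1\<in>cube. \<forall>j2\<in>cube. \<forall>m1\<in>cube. \<forall>m2\<in>cube. \<forall>n1\<in>cube. \<forall>n2\<in>cube.
             Min V \<le> f i1 i2 j1 j2 m1 m2 n1 n2"
  proof (intro ballI)
    fix i1 i2 j1 j2 m1 m2 n1 n2 assume p: "i1 \<in> cube" "i2 \<in> cube" "j1 \<in> cube" "j2 \<in> cube" "m1 \<in> cube" "m2 \<in> cube" "n1 \<in> cube" "n2 \<in> cube"
    obtain v1 v2 v3 v4 v5 v6 v7 v8 where
      v: "v1 \<in> vert" "v2 \<in> vert" "v3 \<in> vert" "v4 \<in> vert" "v5 \<in> vert" "v6 \<in> vert" "v7 \<in> vert" "v8 \<in> vert"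
      "f v1 v2 v3 v4 v5 v6 v7 v8 \<le> f i1 i2 j1 j2 m1 m2 n1 n2" unfolding f_def by (rule descend_obt[OF assms(1,2,4,5) p])
    show "Min V \<le> f i1 i2 j1 j2 m1 m2 n1 n2" using minle[OF v(1-8)] v(9) by linarith
  qed
  have "Min V \<in> V" using finV neV by (rule Min_in)
  then obtain i1 i2 j1 j2 m1 m2 n1 n2 where w: "i1 \<in> vert" "i2 \<in> vert" "j1 \<in> vert" "j2 \<in> vert"
    "m1 \<in> vert" "m2 \<in> vert" "n1 \<in> vert" "n2 \<in> vert" "Min V = f i1 i2 j1 j2 m1 m2 n1 n2"
    unfolding V_def by (rule VS_elim)
  have part1: "\<exists>i1\<in>vert. \<exists>i2\<in>vert. \<exists>j1\<in>vert. \<exists>j2\<in>vert. \<exists>m1\<in>vert. \<exists>m2\<in>vert. \<exists>n1\<in>vert. \<exists>n2\<in>vert.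
           \<forall>i1'\<in>cube. \<forall>i2'\<in>cube. \<forall>j1'\<in>cube. \<forall>j2'\<in>cube. \<forall>m1'\<in>cube. \<forall>m2'\<in>cube. \<forall>n1'\<in>cube. \<forall>n2'\<in>cube.
             f i1 i2 j1 j2 m1 m2 n1 n2 \<le> f i1' i2' j1' j2' m1' m2' n1' n2'"
  proof -
    have all: "\<forall>i1'\<in>cube. \<forall>i2'\<in>cube. \<forall>j1'\<in>cube. \<forall>j2'\<in>cube. \<forall>m1'\<in>cube. \<forall>m2'\<in>cube. \<forall>n1'\<in>cube. \<forall>n2'\<in>cube.
             f i1 i2 j1 j2 m1 m2 n1 n2 \<le> f i1' i2' j1' j2' m1' m2' n1' n2'"
      using part2 unfolding w(9) .
    show ?thesis
      apply (rule bexI[of _ i1], rule bexI[of _ i2], rule bexI[of _ j1], rule bexI[of _ j2],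
             rule bexI[of _ m1], rule bexI[of _ m2], rule bexI[of _ n1], rule bexI[of _ n2])
      by (rule all w(1) w(2) w(3) w(4) w(5) w(6) w(7) w(8))+
  qed
  have part3: "vertex_min \<alpha> W0' H0' b_x' b_y' i' j' m' n' = vertex_min \<alpha> W0 H0 b_x b_y i j m n"
    if "W0' > 0" "H0' > 0" for W0' H0' b_x' b_y' i' j' m' n'
  proof -
    have e1: "hiou \<alpha> W0' H0' b_x' b_y' i' j' m' n' = hiou \<alpha> 1 1 0 0 0 0 0 0"
      by (intro ext) (rule hiou_norm[OF assms(1) that(1) that(2)])
    have e2: "hiou \<alpha> W0 H0 b_x b_y i j m n = hiou \<alpha> 1 1 0 0 0 0 0 0"
      by (intro ext) (rule hiou_norm[OF assms(1) assms(4) assms(5)])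
    show ?thesis unfolding VS_vm e1 e2 by (rule refl)
  qed
  show ?thesis
    apply (intro conjI allI impI)
    subgoal using part1 unfolding f_def .
    subgoal using part2 unfolding f_def vm .
    subgoal by (rule part3)
    done
qed

end
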